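(* Let $\mathbb A$ be an abelian category with enough projective objects. A morphism $(f_0,f_1):a\to b$ in $\mathbb A^{[1]}_c$, where $a:A_1\to A_0$ and $b:B_1\to B_0$, is faithful in $\mathbb A^{[1]}_c$ if and only if the morphism $\begin{pmatrix}-a\\ f_1\end{pmatrix}:A_1\to A_0\oplus B_1$ is a monomorphism in $\mathbb A$.
   Context: Let $\mathbb A$ be an abelian category. The 2-category $\mathbb A^{[1]}$ has as objects the morphisms $a:A_1\to A_0$ of $\mathbb A$. For objects $a:A_1\to A_0$ and $b:B_1\to B_0$, a morphism $a\to b$ is a pair $(f_0,f_1)$ of morphisms $f_i:A_i\to B_i$ of $\mathbb A$ with $b f_1=f_0 a$; composition is componentwise. A 2-arrow $(f_0,f_1)\Rightarrow(g_0,g_1)$ between morphisms $a\to b$ is a morphism $\alpha:A_0\to B_1$ of $\mathbb A$ with $f_1-g_1=\alpha a$ and $f_0-g_0=b\alpha$; vertical composition is addition of such $\alpha$'s, and whiskering is given by $(h_0,h_1)\circ\alpha=h_1\alpha$ and $\alpha\circ(e_0,e_1)=\alpha e_0$. All 2-arrows are invertible, so each $\mathbf{Hom}(a,b)$ is a groupoid. $\mathbb A^{[1]}_c$ is the full 2-subcategory of $\mathbb A^{[1]}$ on the objects $a:A_1\to A_0$ with $A_0$ projective in $\mathbb A$. A morphism $f:a\to b$ of $\mathbb A^{[1]}_c$ is faithful in $\mathbb A^{[1]}_c$ if for every object $x$ of $\mathbb A^{[1]}_c$ the functor $f\circ-:\mathbf{Hom}(x,a)\to\mathbf{Hom}(x,b)$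 is faithful. *)

theory Defs
  imports Main
begin

record ('o, 'm) acat =
  obj :: "'o set"
  arr :: "'m set"
  src :: "'m \<Rightarrow> 'o"
  tgt :: "'m \<Rightarrow> 'o"
  cmp :: "'m \<Rightarrow> 'm \<Rightarrow> 'm"   (* cmp C g f = g o f *)
  idn :: "'o \<Rightarrow> 'm"
  pls :: "'m \<Rightarrow> 'm \<Rightarrow> 'm"
  zro :: "'o \<Rightarrow> 'o \<Rightarrow> 'm"   (* zero morphism A \<rightarrow> B *)
  ngt :: "'m \<Rightarrow> 'm"

definition hom :: "('o, 'm, 'x) acat_scheme \<Rightarrow> 'o \<Rightarrow> 'o \<Rightarrow> 'm set" where
  "hom C A B = {f \<in> arr C. src C f = A \<and> tgt C f = B}"

definition sbt :: "('o, 'm, 'x) acat_scheme \<Rightarrow> 'm \<Rightarrow> 'm \<Rightarrow> 'm" where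
  "sbt C f g = pls C f (ngt C g)"

definition category :: "('o, 'm, 'x) acat_scheme \<Rightarrow> bool" where
  "category C \<longleftrightarrow>
     (\<forall>f\<in>arr C. src C f \<in> obj C \<and> tgt C f \<in> obj C) \<and>
     (\<forall>A\<in>obj C. idn C A \<in> hom C A A) \<and>
     (\<forall>f g. f \<in> arr C \<and> g \<in> arr C \<and> tgt C f = src C g
        \<longrightarrow> cmp C g f \<in> hom C (src C f) (tgt C g)) \<and>
     (\<forall>f g h. f \<in> arr C \<and> g \<in> arr C \<and> h \<in> arr C \<and> tgt C f = src C g \<and> tgt C g = src C h
        \<longrightarrow> cmp C h (cmp C g f) = cmp C (cmp C h g) f) \<and>
     (\<forall>f\<in>arr C. cmp C (idn C (tgt C f)) f = f \<and> cmp C f (idn C (src C f)) = f)"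

definition preadditive :: "('o, 'm, 'x) acat_scheme \<Rightarrow> bool" where
  "preadditive C \<longleftrightarrow> category C \<and>
     (\<forall>A\<in>obj C. \<forall>B\<in>obj C.
        zro C A B \<in> hom C A B \<and>
        (\<forall>f\<in>hom C A B. \<forall>g\<in>hom C A B. pls C f g \<in> hom C A B) \<and>
        (\<forall>f\<in>hom C A B. ngt C f \<in> hom C A B) \<and>
        (\<forall>f\<in>hom C A B. \<forall>g\<in>hom C A B. \<forall>h\<in>hom C A B.
            pls C (pls C f g) h = pls C f (pls C g h)) \<and>
        (\<forall>f\<in>hom C A B. \<forall>g\<in>hom C A B. pls C f g = pls C g f) \<and>
        (\<forall>f\<in>hom C A B. pls C (zro C A B) f = f) \<and>
        (\<forall>f\<in>hom C A B. pls C (ngt C f) f = zro C A B)) \<and>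
     (\<forall>A\<in>obj C. \<forall>B\<in>obj C. \<forall>D\<in>obj C.
        \<forall>f\<in>hom C A B. \<forall>g\<in>hom C B D. \<forall>g'\<in>hom C B D.
          cmp C (pls C g g') f = pls C (cmp C g f) (cmp C g' f)) \<and>
     (\<forall>A\<in>obj C. \<forall>B\<in>obj C. \<forall>D\<in>obj C.
        \<forall>f\<in>hom C A B. \<forall>f'\<in>hom C A B. \<forall>g\<in>hom C B D.
          cmp C g (pls C f f') = pls C (cmp C g f) (cmp C g f'))"

definition zero_object :: "('o, 'm, 'x) acat_scheme \<Rightarrow> 'o \<Rightarrow> bool" where
  "zero_object C Z \<longleftrightarrow> Z \<in> obj C \<and>
     (\<forall>A\<in>obj C. (\<exists>!f. f \<in> hom C Z A) \<and> (\<exists>!f. f \<in> hom C A Z))"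

definition is_biproduct ::
  "('o, 'm, 'x) acat_scheme \<Rightarrow> 'o \<Rightarrow> 'o \<Rightarrow> 'o \<Rightarrow> 'm \<Rightarrow> 'm \<Rightarrow> 'm \<Rightarrow> 'm \<Rightarrow> bool" where
  "is_biproduct C A B S i1 i2 p1 p2 \<longleftrightarrow> S \<in> obj C \<and>
     i1 \<in> hom C A S \<and> i2 \<in> hom C B S \<and> p1 \<in> hom C S A \<and> p2 \<in> hom C S B \<and>
     cmp C p1 i1 = idn C A \<and> cmp C p2 i2 = idn C B \<and>
     cmp C p2 i1 = zro C A B \<and> cmp C p1 i2 = zro C B A \<and>
     pls C (cmp C i1 p1) (cmp C i2 p2) = idn C S"

definition is_kernel :: "('o, 'm, 'x) acat_scheme \<Rightarrow> 'm \<Rightarrow> 'm \<Rightarrow> bool" where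
  "is_kernel C f k \<longleftrightarrow> f \<in> arr C \<and> k \<in> arr C \<and> tgt C k = src C f \<and>
     cmp C f k = zro C (src C k) (tgt C f) \<and>
     (\<forall>g\<in>arr C. tgt C g = src C f \<and> cmp C f g = zro C (src C g) (tgt C f)
        \<longrightarrow> (\<exists>!u. u \<in> hom C (src C g) (src C k) \<and> cmp C k u = g))"

definition is_cokernel :: "('o, 'm, 'x) acat_scheme \<Rightarrow> 'm \<Rightarrow> 'm \<Rightarrow> bool" where
  "is_cokernel C f q \<longleftrightarrow> f \<in> arr C \<and> q \<in> arr C \<and> src C q = tgt C f \<and>
     cmp C q f = zro C (src C f) (tgt C q) \<and>
     (\<forall>g\<in>arr C. src C g = tgt C f \<and> cmp C g f = zro C (src C f) (tgt C g)
        \<longrightarrow> (\<exists>!u. u \<in> hom C (tgt C q) (tgt C g) \<and> cmp C u q = g))"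

definition is_mono :: "('o, 'm, 'x) acat_scheme \<Rightarrow> 'm \<Rightarrow> bool" where
  "is_mono C m \<longleftrightarrow> m \<in> arr C \<and>
     (\<forall>g h. g \<in> arr C \<and> h \<in> arr C \<and> tgt C g = src C m \<and> tgt C h = src C m \<and>
            src C g = src C h \<and> cmp C m g = cmp C m h \<longrightarrow> g = h)"

definition is_epi :: "('o, 'm, 'x) acat_scheme \<Rightarrow> 'm \<Rightarrow> bool" where
  "is_epi C e \<longleftrightarrow> e \<in> arr C \<and>
     (\<forall>g h. g \<in> arr C \<and> h \<in> arr C \<and> src C g = tgt C e \<and> src C h = tgt C e \<and>
            tgt C g = tgt C h \<and> cmp C g e = cmp C h e \<longrightarrow> g = h)"

definition abelian_category :: "('o, 'm, 'x) acat_scheme \<Rightarrow> bool" where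
  "abelian_category C \<longleftrightarrow> preadditive C \<and>
     (\<exists>Z. zero_object C Z) \<and>
     (\<forall>A\<in>obj C. \<forall>B\<in>obj C. \<exists>S i1 i2 p1 p2. is_biproduct C A B S i1 i2 p1 p2) \<and>
     (\<forall>f\<in>arr C. \<exists>k. is_kernel C f k) \<and>
     (\<forall>f\<in>arr C. \<exists>q. is_cokernel C f q) \<and>
     (\<forall>m. is_mono C m \<longrightarrow> (\<exists>f. is_kernel C f m)) \<and>
     (\<forall>e. is_epi C e \<longrightarrow> (\<exists>f. is_cokernel C f e))"

definition projective :: "('o, 'm, 'x) acat_scheme \<Rightarrow> 'o \<Rightarrow> bool" where
  "projective C P \<longleftrightarrow> P \<in> obj C \<and>
     (\<forall>e g. is_epi C e \<and> g \<in> hom C P (tgt C e) \<longrightarrow> (\<exists>h\<in>hom C P (src C e). cmp C e h = g))"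

definition enough_projectives :: "('o, 'm, 'x) acat_scheme \<Rightarrow> bool" where
  "enough_projectives C \<longleftrightarrow>
     (\<forall>A\<in>obj C. \<exists>P e. projective C P \<and> e \<in> hom C P A \<and> is_epi C e)"

text \<open>The 2-category A^[1]_c. Objects: morphisms a : A1 \<rightarrow> A0 with A0 projective
  (A1 = src a, A0 = tgt a). A morphism a \<rightarrow> b is a pair (f0, f1).\<close>

definition cobj :: "('o, 'm, 'x) acat_scheme \<Rightarrow> 'm \<Rightarrow> bool" where
  "cobj C a \<longleftrightarrow> a \<in> arr C \<and> projective C (tgt C a)"

definition amor :: "('o, 'm, 'x) acat_scheme \<Rightarrow> 'm \<Rightarrow> 'm \<Rightarrow> 'm \<times> 'm \<Rightarrow> bool" where
  "amor C a b f \<longleftrightarrow> fst f \<in> hom C (tgt C a) (tgt C b) \<and> snd f \<in> hom C (src C a) (src C b) \<and>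
     cmp C b (snd f) = cmp C (fst f) a"

definition two_cell :: "('o, 'm, 'x) acat_scheme \<Rightarrow> 'm \<Rightarrow> 'm \<Rightarrow> 'm \<times> 'm \<Rightarrow> 'm \<times> 'm \<Rightarrow> 'm \<Rightarrow> bool" where
  "two_cell C a b f g \<alpha> \<longleftrightarrow> amor C a b f \<and> amor C a b g \<and>
     \<alpha> \<in> hom C (tgt C a) (src C b) \<and>
     sbt C (snd f) (snd g) = cmp C \<alpha> a \<and> sbt C (fst f) (fst g) = cmp C b \<alpha>"

text \<open>f : a \<rightarrow> b is faithful in A^[1]_c: for every object x of A^[1]_c the functor
  f \<circ> - : Hom(x,a) \<rightarrow> Hom(x,b) is faithful; on 2-arrows it is alpha \<mapsto> f1 alpha.\<close>
definition faithful_c :: "('o, 'm, 'x) acat_scheme \<Rightarrow> 'm \<Rightarrow> 'm \<Rightarrow> 'm \<times> 'm \<Rightarrow> bool" where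
  "faithful_c C a b f \<longleftrightarrow>
     (\<forall>x. cobj C x \<longrightarrow>
        (\<forall>g h \<alpha> \<beta>. two_cell C x a g h \<alpha> \<and> two_cell C x a g h \<beta> \<and>
           cmp C (snd f) \<alpha> = cmp C (snd f) \<beta> \<longrightarrow> \<alpha> = \<beta>))"

end

theory Submission
  imports Defs
begin

lemma homD: "f \<in> hom C A B \<Longrightarrow> f \<in> arr C \<and> src C f = A \<and> tgt C f = B"
  by (simp add: hom_def)

lemma homI: "f \<in> arr C \<Longrightarrow> f \<in> hom C (src C f) (tgt C f)"
  by (simp add: hom_def)

lemma pa_cat: "preadditive C \<Longrightarrow> category C"
  by (simp add: preadditive_def)

lemma hom_obj: "category C \<Longrightarrow> f \<in> hom C A B \<Longrightarrow> A \<in> obj C \<and> B \<in> obj C"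
  unfolding category_def hom_def by auto

lemma cmp_hom: "category C \<Longrightarrow> f \<in> hom C A B \<Longrightarrow> g \<in> hom C B D \<Longrightarrow> cmp C g f \<in> hom C A D"
  unfolding category_def hom_def by auto

lemma cassoc: "category C \<Longrightarrow> f \<in> hom C A B \<Longrightarrow> g \<in> hom C B D \<Longrightarrow> h \<in> hom C D E
   \<Longrightarrow> cmp C h (cmp C g f) = cmp C (cmp C h g) f"
  unfolding category_def hom_def by auto

lemma cid_l: "category C \<Longrightarrow> f \<in> hom C A B \<Longrightarrow> cmp C (idn C B) f = f"
  unfolding category_def hom_def by auto

context
  fixes C :: "('o,'m,'x) acat_scheme"
  assumes pa: "preadditive C"
begin

lemma cat: "category C" using pa by (simp add: preadditive_def)

lemma grp: assumes "A \<in> obj C \<and> B \<in> obj C" shows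
  "zro C A B \<in> hom C A B \<and>
        (\<forall>f\<in>hom C A B. \<forall>g\<in>hom C A B. pls C f g \<in> hom C A B) \<and>
        (\<forall>f\<in>hom C A B. ngt C f \<in> hom C A B) \<and>
        (\<forall>f\<in>hom C A B. \<forall>g\<in>hom C A B. \<forall>h\<in>hom C A B.
            pls C (pls C f g) h = pls C f (pls C g h)) \<and>
        (\<forall>f\<in>hom C A B. \<forall>g\<in>hom C A B. pls C f g = pls C g f) \<and>
        (\<forall>f\<in>hom C A B. pls C (zro C A B) f = f) \<and>
        (\<forall>f\<in>hom C A B. pls C (ngt C f) f = zro C A B)"
proof -
  have "\<forall>A\<in>obj C. \<forall>B\<in>obj C.
        zro C A B \<in> hom C A B \<and>
        (\<forall>f\<in>hom C A B. \<forall>g\<in>hom C A B. pls C f g \<in> hom C A B) \<and>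
        (\<forall>f\<in>hom C A B. ngt C f \<in> hom C A B) \<and>
        (\<forall>f\<in>hom C A B. \<forall>g\<in>hom C A B. \<forall>h\<in>hom C A B.
            pls C (pls C f g) h = pls C f (pls C g h)) \<and>
        (\<forall>f\<in>hom C A B. \<forall>g\<in>hom C A B. pls C f g = pls C g f) \<and>
        (\<forall>f\<in>hom C A B. pls C (zro C A B) f = f) \<and>
        (\<forall>f\<in>hom C A B. pls C (ngt C f) f = zro C A B)"
    using pa unfolding preadditive_def by (elim conjE)
  then show ?thesis using assms by blast
qed

lemma zro_hom: "A \<in> obj C \<Longrightarrow> B \<in> obj C \<Longrightarrow> zro C A B \<in> hom C A B"
  using grp by blast

lemma pls_hom: "f \<in> hom C A B \<Longrightarrow> g \<in> hom C A B \<Longrightarrow> pls C f g \<in> hom C A B"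
  by (frule hom_obj[OF cat], drule grp, blast)

lemma ngt_hom: "f \<in> hom C A B \<Longrightarrow> ngt C f \<in> hom C A B"
  by (frule hom_obj[OF cat], drule grp, blast)

lemma add_assoc: "f \<in> hom C A B \<Longrightarrow> g \<in> hom C A B \<Longrightarrow> h \<in> hom C A B \<Longrightarrow>
   pls C (pls C f g) h = pls C f (pls C g h)"
  by (frule hom_obj[OF cat], drule grp, blast)

lemma add_comm: "f \<in> hom C A B \<Longrightarrow> g \<in> hom C A B \<Longrightarrow> pls C f g = pls C g f"
  by (frule hom_obj[OF cat], drule grp, blast)

lemma zero_add: "f \<in> hom C A B \<Longrightarrow> pls C (zro C A B) f = f"
  by (frule hom_obj[OF cat], drule grp, blast)

lemma neg_add: "f \<in> hom C A B \<Longrightarrow> pls C (ngt C f) f = zro C A B"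
  by (frule hom_obj[OF cat], drule grp, blast)

lemma distr_l: "f \<in> hom C A B \<Longrightarrow> g \<in> hom C B D \<Longrightarrow> g' \<in> hom C B D \<Longrightarrow>
   cmp C (pls C g g') f = pls C (cmp C g f) (cmp C g' f)"
  apply (frule hom_obj[OF cat], frule hom_obj[OF cat, of g])
  using pa unfolding preadditive_def by blast

lemma distr_r: "f \<in> hom C A B \<Longrightarrow> f' \<in> hom C A B \<Longrightarrow> g \<in> hom C B D \<Longrightarrow>
   cmp C g (pls C f f') = pls C (cmp C g f) (cmp C g f')"
  apply (frule hom_obj[OF cat], frule hom_obj[OF cat, of g])
  using pa unfolding preadditive_def by blast

lemma add_zero: "f \<in> hom C A B \<Longrightarrow> pls C f (zro C A B) = f"
  by (metis add_comm zero_add zro_hom hom_obj[OF cat])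

lemma cancel: assumes "x \<in> hom C A B" "y \<in> hom C A B" "c \<in> hom C A B"
  "pls C x c = pls C y c" shows "x = y"
proof -
  have "x = pls C x (pls C c (ngt C c))"
    using assms by (metis add_comm add_zero neg_add ngt_hom)
  also have "\<dots> = pls C (pls C x c) (ngt C c)" using assms by (metis add_assoc ngt_hom)
  also have "\<dots> = pls C (pls C y c) (ngt C c)" using assms by simp
  also have "\<dots> = pls C y (pls C c (ngt C c))" using assms by (metis add_assoc ngt_hom)
  also have "\<dots> = y" using assms by (metis add_comm add_zero neg_add ngt_hom)
  finally show ?thesis .
qed

lemma idem_zero: assumes "x \<in> hom C A B" "pls C x x = x" shows "x = zro C A B"
  using cancel[OF assms(1) _ assms(1)] assms zero_add by (metis zro_hom hom_obj[OF cat])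

lemma cmp_zro_l: assumes "f \<in> hom C A B" "D \<in> obj C"
  shows "cmp C (zro C B D) f = zro C A D"
proof -
  have B: "B \<in> obj C" using hom_obj[OF cat assms(1)] by simp
  have z: "zro C B D \<in> hom C B D" using zro_hom B assms by simp
  have zz: "pls C (zro C B D) (zro C B D) = zro C B D" using zero_add z by simp
  have h: "cmp C (zro C B D) f \<in> hom C A D" using cmp_hom[OF cat assms(1) z] .
  have "pls C (cmp C (zro C B D) f) (cmp C (zro C B D) f) = cmp C (zro C B D) f"
    using distr_l[OF assms(1) z z] zz by simp
  thus ?thesis using idem_zero h by simp
qed

lemma cmp_zro_r: assumes "g \<in> hom C B D" "A \<in> obj C"
  shows "cmp C g (zro C A B) = zro C A D"
proof -
  have B: "B \<in> obj C" using hom_obj[OF cat assms(1)] by simp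
  have z: "zro C A B \<in> hom C A B" using zro_hom B assms by simp
  have zz: "pls C (zro C A B) (zro C A B) = zro C A B" using zero_add z by simp
  have h: "cmp C g (zro C A B) \<in> hom C A D" using cmp_hom[OF cat z assms(1)] .
  have "pls C (cmp C g (zro C A B)) (cmp C g (zro C A B)) = cmp C g (zro C A B)"
    using distr_r[OF z z assms(1)] zz by simp
  thus ?thesis using idem_zero h by simp
qed

lemma ngt_zro: assumes "A \<in> obj C" "B \<in> obj C" shows "ngt C (zro C A B) = zro C A B"
proof -
  have z: "zro C A B \<in> hom C A B" using zro_hom assms by simp
  have "pls C (ngt C (zro C A B)) (zro C A B) = zro C A B" using neg_add z by simp
  thus ?thesis using add_zero ngt_hom z by metis
qed

lemma sbt_zro: assumes "A \<in> obj C" "B \<in> obj C" shows "sbt C (zro C A B) (zro C A B) = zro C A B"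
  using assms ngt_zro zero_add zro_hom by (simp add: sbt_def)

lemma neg_cmp: assumes "a \<in> hom C A B" "d \<in> hom C X A"
  shows "pls C (cmp C (ngt C a) d) (cmp C a d) = zro C X B"
proof -
  have "pls C (cmp C (ngt C a) d) (cmp C a d) = cmp C (pls C (ngt C a) a) d"
    using distr_l[OF assms(2) ngt_hom[OF assms(1)] assms(1)] by simp
  also have "\<dots> = zro C X B" using neg_add[OF assms(1)] cmp_zro_l[OF assms(2)]
    hom_obj[OF cat assms(1)] by simp
  finally show ?thesis .
qed

lemma neg_cancel: assumes "x \<in> hom C A B" "y \<in> hom C A B" "pls C x (ngt C y) = zro C A B"
  shows "x = y"
proof -
  have "pls C (pls C x (ngt C y)) y = pls C x (pls C (ngt C y) y)"
    using add_assoc assms ngt_hom by blast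
  also have "\<dots> = x" using neg_add[OF assms(2)] add_zero assms by simp
  finally have "x = pls C (zro C A B) y" using assms(3) by simp
  thus ?thesis using zero_add assms by simp
qed

lemma neg_cmp_r: assumes "g \<in> hom C B D" "h \<in> hom C A B"
  shows "pls C (cmp C g (ngt C h)) (cmp C g h) = zro C A D"
proof -
  have "pls C (cmp C g (ngt C h)) (cmp C g h) = cmp C g (pls C (ngt C h) h)"
    using distr_r[OF ngt_hom[OF assms(2)] assms(2) assms(1)] by simp
  also have "\<dots> = zro C A D" using neg_add[OF assms(2)] cmp_zro_r[OF assms(1)]
    hom_obj[OF cat assms(2)] by simp
  finally show ?thesis .
qed

end

theorem lemma3p2:
  fixes C :: "('o, 'm) acat"
  assumes "abelian_category C"
    and "enough_projectives C"
    and "cobj C a" and "cobj C b"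
    and "amor C a b (f0, f1)"
    and "is_biproduct C (tgt C a) (src C b) S i1 i2 p1 p2"
  shows "faithful_c C a b (f0, f1) \<longleftrightarrow>
         is_mono C (pls C (cmp C i1 (ngt C a)) (cmp C i2 f1))"
proof -
  have pa: "preadditive C" using assms(1) by (simp add: abelian_category_def)
  have ct: "category C" using cat[OF pa] .
  define A0 where "A0 = tgt C a"
  define A1 where "A1 = src C a"
  define B1 where "B1 = src C b"
  define m where "m = pls C (cmp C i1 (ngt C a)) (cmp C i2 f1)"
  have ah: "a \<in> hom C A1 A0" using assms(3) by (simp add: cobj_def hom_def A0_def A1_def)
  have f1h: "f1 \<in> hom C A1 B1" using assms(5) by (simp add: amor_def A1_def B1_def)
  have bp: "S \<in> obj C" "i1 \<in> hom C A0 S" "i2 \<in> hom C B1 S" "p1 \<in> hom C S A0" "p2 \<in> hom C S B1"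
     "cmp C p1 i1 = idn C A0" "cmp C p2 i2 = idn C B1"
     "cmp C p2 i1 = zro C A0 B1" "cmp C p1 i2 = zro C B1 A0"
    using assms(6) by (simp_all add: is_biproduct_def A0_def B1_def)
  have ob: "A0 \<in> obj C" "A1 \<in> obj C" "B1 \<in> obj C"
    using hom_obj[OF ct ah] hom_obj[OF ct f1h] by auto
  have nah: "ngt C a \<in> hom C A1 A0" using ngt_hom[OF pa ah] .
  have mh: "m \<in> hom C A1 S" unfolding m_def
    by (rule pls_hom[OF pa]; rule cmp_hom[OF ct]; fact)
  have mexp: "cmp C m d = pls C (cmp C i1 (cmp C (ngt C a) d)) (cmp C i2 (cmp C f1 d))"
    if d: "d \<in> hom C X A1" for d X
  proof -
    have "cmp C m d = pls C (cmp C (cmp C i1 (ngt C a)) d) (cmp C (cmp C i2 f1) d)"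
      unfolding m_def using distr_l[OF pa d] cmp_hom[OF ct nah bp(2)] cmp_hom[OF ct f1h bp(3)]
      by blast
    also have "\<dots> = pls C (cmp C i1 (cmp C (ngt C a) d)) (cmp C i2 (cmp C f1 d))"
      using cassoc[OF ct d nah bp(2)] cassoc[OF ct d f1h bp(3)] by simp
    finally show ?thesis .
  qed
  have key: "cmp C a d = zro C X A0 \<and> cmp C f1 d = zro C X B1"
    if d: "d \<in> hom C X A1" and md: "cmp C m d = zro C X S" for d X
  proof -
    have X: "X \<in> obj C" using hom_obj[OF ct d] by simp
    have u: "cmp C (ngt C a) d \<in> hom C X A0" using cmp_hom[OF ct d nah] .
    have v: "cmp C f1 d \<in> hom C X B1" using cmp_hom[OF ct d f1h] .
    have i1u: "cmp C i1 (cmp C (ngt C a) d) \<in> hom C X S" using cmp_hom[OF ct u bp(2)] .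
    have i2v: "cmp C i2 (cmp C f1 d) \<in> hom C X S" using cmp_hom[OF ct v bp(3)] .
    have "cmp C p1 (cmp C m d) = pls C (cmp C p1 (cmp C i1 (cmp C (ngt C a) d)))
            (cmp C p1 (cmp C i2 (cmp C f1 d)))"
      using mexp[OF d] distr_r[OF pa i1u i2v bp(4)] by simp
    also have "\<dots> = pls C (cmp C (ngt C a) d) (zro C X A0)"
      using cassoc[OF ct u bp(2) bp(4)] cassoc[OF ct v bp(3) bp(4)] bp(6,9)
        cid_l[OF ct u] cmp_zro_l[OF pa v ob(1)] by simp
    also have "\<dots> = cmp C (ngt C a) d" using add_zero[OF pa u] .
    finally have e1: "cmp C p1 (cmp C m d) = cmp C (ngt C a) d" .
    have "cmp C p1 (cmp C m d) = zro C X A0" using md cmp_zro_r[OF pa bp(4) X] by simp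
    hence na: "cmp C (ngt C a) d = zro C X A0" using e1 by simp
    have ad: "cmp C a d \<in> hom C X A0" using cmp_hom[OF ct d ah] .
    have "pls C (zro C X A0) (cmp C a d) = zro C X A0" using neg_cmp[OF pa ah d] na by simp
    hence r1: "cmp C a d = zro C X A0" using zero_add[OF pa ad] by simp
    have "cmp C p2 (cmp C m d) = pls C (cmp C p2 (cmp C i1 (cmp C (ngt C a) d)))
            (cmp C p2 (cmp C i2 (cmp C f1 d)))"
      using mexp[OF d] distr_r[OF pa i1u i2v bp(5)] by simp
    also have "\<dots> = pls C (zro C X B1) (cmp C f1 d)"
      using cassoc[OF ct u bp(2) bp(5)] cassoc[OF ct v bp(3) bp(5)] bp(7,8)
        cid_l[OF ct v] cmp_zro_l[OF pa u ob(3)] by simp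
    also have "\<dots> = cmp C f1 d" using zero_add[OF pa v] .
    finally have "cmp C f1 d = zro C X B1" using md cmp_zro_r[OF pa bp(5) X] by simp
    with r1 show ?thesis by simp
  qed
  show ?thesis unfolding m_def[symmetric]
  proof
    assume F: "faithful_c C a b (f0, f1)"
    show "is_mono C m"
      unfolding is_mono_def
    proof (intro conjI allI impI)
      show "m \<in> arr C" using mh by (simp add: hom_def)
      fix g h assume gh: "g \<in> arr C \<and> h \<in> arr C \<and> tgt C g = src C m \<and> tgt C h = src C m \<and>
            src C g = src C h \<and> cmp C m g = cmp C m h"
      define Y where "Y = src C g"
      have gH: "g \<in> hom C Y A1" "h \<in> hom C Y A1" using gh mh by (auto simp: hom_def Y_def)
      have Y: "Y \<in> obj C" using hom_obj[OF ct gH(1)] by simp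
      define d where "d = pls C g (ngt C h)"
      have dH: "d \<in> hom C Y A1" unfolding d_def using pls_hom[OF pa gH(1) ngt_hom[OF pa gH(2)]] .
      have mg: "cmp C m g \<in> hom C Y S" "cmp C m h \<in> hom C Y S" "cmp C m (ngt C h) \<in> hom C Y S"
        using cmp_hom[OF ct gH(1) mh] cmp_hom[OF ct gH(2) mh] cmp_hom[OF ct ngt_hom[OF pa gH(2)] mh]
        by auto
      have "pls C (cmp C m d) (cmp C m h) = pls C (pls C (cmp C m g) (cmp C m (ngt C h))) (cmp C m h)"
        unfolding d_def using distr_r[OF pa gH(1) ngt_hom[OF pa gH(2)] mh] by simp
      also have "\<dots> = pls C (cmp C m g) (pls C (cmp C m (ngt C h)) (cmp C m h))"
        using add_assoc[OF pa mg(1) mg(3) mg(2)] .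
      also have "\<dots> = cmp C m g" using neg_cmp_r[OF pa mh gH(2)] add_zero[OF pa mg(1)] by simp
      also have "\<dots> = pls C (zro C Y S) (cmp C m h)" using gh zero_add[OF pa mg(2)] by simp
      finally have md: "cmp C m d = zro C Y S"
        using cancel[OF pa cmp_hom[OF ct dH mh] zro_hom[OF pa Y bp(1)] mg(2)] by simp
      obtain P e where Pe: "projective C P" "e \<in> hom C P Y" "is_epi C e"
        using assms(2) Y unfolding enough_projectives_def by blast
      have P: "P \<in> obj C" using Pe(1) by (simp add: projective_def)
      define \<delta> where "\<delta> = cmp C d e"
      have \<delta>H: "\<delta> \<in> hom C P A1" unfolding \<delta>_def using cmp_hom[OF ct Pe(2) dH] .
      have "cmp C m \<delta> = cmp C (cmp C m d) e" unfolding \<delta>_def using cassoc[OF ct Pe(2) dH mh] .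
      also have "\<dots> = zro C P S" using md cmp_zro_l[OF pa Pe(2) bp(1)] by simp
      finally have k: "cmp C a \<delta> = zro C P A0 \<and> cmp C f1 \<delta> = zro C P B1" using key[OF \<delta>H] by simp
      define x where "x = zro C P P"
      have xH: "x \<in> hom C P P" unfolding x_def using zro_hom[OF pa P P] .
      have cx: "cobj C x" using xH Pe(1) by (simp add: cobj_def hom_def)
      define gg where "gg = (zro C P A0, zro C P A1)"
      have z0: "zro C P A0 \<in> hom C P A0" and z1: "zro C P A1 \<in> hom C P A1"
        using zro_hom[OF pa P] ob by auto
      have am: "amor C x a gg" unfolding amor_def gg_def
        using xH z0 z1 ah cmp_zro_r[OF pa ah P] cmp_zro_l[OF pa xH ob(1)]
        by (simp add: hom_def A0_def A1_def x_def)
      have sb0: "sbt C (zro C P A0) (zro C P A0) = zro C P A0" using sbt_zro[OF pa P ob(1)] .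
      have sb1: "sbt C (zro C P A1) (zro C P A1) = zro C P A1" using sbt_zro[OF pa P ob(2)] .
      have xs: "tgt C x = P" "src C x = P" using xH by (auto simp: hom_def)
      have t1: "two_cell C x a gg gg \<delta>" unfolding two_cell_def
        using am \<delta>H k sb0 sb1 cmp_zro_r[OF pa \<delta>H P] xs
        by (simp add: gg_def x_def A0_def A1_def)
      have t2: "two_cell C x a gg gg (zro C P A1)" unfolding two_cell_def
        using am z1 sb0 sb1 cmp_zro_r[OF pa z1 P] cmp_zro_r[OF pa ah P] xs
        by (simp add: gg_def x_def A0_def A1_def)
      have "cmp C f1 (zro C P A1) = zro C P B1" using cmp_zro_r[OF pa f1h P] .
      moreover have "\<forall>g h \<alpha> \<beta>. two_cell C x a g h \<alpha> \<and> two_cell C x a g h \<beta> \<and>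
           cmp C (snd (f0, f1)) \<alpha> = cmp C (snd (f0, f1)) \<beta> \<longrightarrow> \<alpha> = \<beta>"
        using F cx unfolding faithful_c_def by blast
      ultimately have "\<delta> = zro C P A1" using t1 t2 k
        by (metis (no_types, lifting) snd_conv)
      hence "cmp C d e = cmp C (zro C Y A1) e"
        using cmp_zro_l[OF pa Pe(2) ob(2)] unfolding \<delta>_def by simp
      hence "d = zro C Y A1" using Pe(3) dH Pe(2) zro_hom[OF pa Y ob(2)]
        unfolding is_epi_def hom_def by auto
      thus "g = h" using neg_cancel[OF pa gH] unfolding d_def by simp
    qed
  next
    assume M: "is_mono C m"
    show "faithful_c C a b (f0, f1)" unfolding faithful_c_def
    proof (intro allI impI)
      fix x g h \<alpha> \<beta>
      assume cx: "cobj C x"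
      assume H: "two_cell C x a g h \<alpha> \<and> two_cell C x a g h \<beta> \<and>
           cmp C (snd (f0, f1)) \<alpha> = cmp C (snd (f0, f1)) \<beta>"
      define X where "X = tgt C x"
      have aH: "\<alpha> \<in> hom C X A1" "\<beta> \<in> hom C X A1" using H
        by (auto simp: two_cell_def X_def A1_def)
      have eqa: "cmp C a \<alpha> = cmp C a \<beta>" using H unfolding two_cell_def by metis
      have eqf: "cmp C f1 \<alpha> = cmp C f1 \<beta>" using H by simp
      have na: "cmp C (ngt C a) \<alpha> = cmp C (ngt C a) \<beta>"
        using cancel[OF pa cmp_hom[OF ct aH(1) nah] cmp_hom[OF ct aH(2) nah] cmp_hom[OF ct aH(1) ah]]
          neg_cmp[OF pa ah aH(1)] neg_cmp[OF pa ah aH(2)] eqa by simp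
      have "cmp C m \<alpha> = cmp C m \<beta>" using mexp[OF aH(1)] mexp[OF aH(2)] na eqf by simp
      thus "\<alpha> = \<beta>" using M aH mh unfolding is_mono_def hom_def by auto
    qed
  qed
qed

end
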